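(* Let $n\geq 5$. Let $S_n^+$ be any graph obtained from the star $S_n$ on $n$ vertices by adding one new edge (joining two leaves), and let $S_n^{++}$ be any graph obtained from $S_n^+$ by adding one further new edge (joining two nonadjacent vertices of $S_n^+$). Then $px_k(S_n^{++})\leq n-3$ for each integer $k$ with $3\leq k\leq n$.
   Context: All graphs are finite, simple, undirected and connected. An edge-coloring of a graph assigns a color to each edge (adjacent edges may receive the same color). A tree in an edge-colored graph is proper if any two adjacent edges of the tree receive different colors. For $S\subseteq V(G)$, an $S$-tree is a subgraph of $G$ that is a tree containing all vertices of $S$. For a connected graph $G$ of order $n$ and an integer $k$ with $2\le k\le n$, an edge-coloring of $G$ is a $k$-proper coloring if for every set $S$ of $k$ vertices of $G$ there exists a proper $S$-tree in $G$. The $k$-proper index $px_k(G)$ is the minimum number of colors used in a $k$-proper coloring of $G$. The star $S_n$ is the tree $K_{1,n-1}$ on $n$ vertices. *)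

theory Defs
  imports Main
begin

definition simple_graph :: "'a set \<Rightarrow> 'a set set \<Rightarrow> bool" where
  "simple_graph V E \<longleftrightarrow> finite V \<and> (\<forall>e\<in>E. e \<subseteq> V \<and> card e = 2)"

definition reach :: "'a set set \<Rightarrow> 'a \<Rightarrow> 'a \<Rightarrow> bool" where
  "reach F u w \<longleftrightarrow> (u, w) \<in> {(x, y). {x, y} \<in> F}\<^sup>*"

definition connected_graph :: "'a set \<Rightarrow> 'a set set \<Rightarrow> bool" where
  "connected_graph V E \<longleftrightarrow> V \<noteq> {} \<and> (\<forall>u\<in>V. \<forall>w\<in>V. reach E u w)"

text \<open>Acyclic: no edge lies on a cycle, i.e. the endpoints of each edge are not
  connected after deleting that edge.\<close>
definition acyclic_edges :: "'a set set \<Rightarrow> bool" where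
  "acyclic_edges F \<longleftrightarrow> (\<forall>u w. {u, w} \<in> F \<longrightarrow> \<not> reach (F - {{u, w}}) u w)"

definition subtree :: "'a set \<Rightarrow> 'a set set \<Rightarrow> 'a set \<Rightarrow> 'a set set \<Rightarrow> bool" where
  "subtree V E TV TE \<longleftrightarrow> TV \<subseteq> V \<and> TE \<subseteq> E \<and> (\<forall>e\<in>TE. e \<subseteq> TV)
     \<and> connected_graph TV TE \<and> acyclic_edges TE"

definition proper_edges :: "('a set \<Rightarrow> nat) \<Rightarrow> 'a set set \<Rightarrow> bool" where
  "proper_edges c TE \<longleftrightarrow> (\<forall>e\<in>TE. \<forall>f\<in>TE. e \<noteq> f \<and> e \<inter> f \<noteq> {} \<longrightarrow> c e \<noteq> c f)"

definition k_proper_coloring :: "'a set \<Rightarrow> 'a set set \<Rightarrow> nat \<Rightarrow> ('a set \<Rightarrow> nat) \<Rightarrow> bool" where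
  "k_proper_coloring V E k c \<longleftrightarrow>
     (\<forall>S. S \<subseteq> V \<and> card S = k \<longrightarrow>
        (\<exists>TV TE. subtree V E TV TE \<and> S \<subseteq> TV \<and> proper_edges c TE))"

definition proper_index :: "'a set \<Rightarrow> 'a set set \<Rightarrow> nat \<Rightarrow> nat" where
  "proper_index V E k = (LEAST m. \<exists>c. k_proper_coloring V E k c \<and> card (c ` E) = m)"

definition star_edges :: "'a set \<Rightarrow> 'a \<Rightarrow> 'a set set" where
  "star_edges V v = {{v, u} | u. u \<in> V - {v}}"

end

theory Submission
  imports Defs
begin

lemma reach_sym: "reach F u w \<Longrightarrow> reach F w u"
proof -
  let ?R = "{(x, y). {x, y} \<in> F}"
  have c: "?R\<inverse> = ?R" by (auto simp: insert_commute)
  assume "reach F u w"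
  then have "(w,u) \<in> (?R\<inverse>)\<^sup>*" unfolding reach_def by (simp add: rtrancl_converseI)
  then show ?thesis unfolding reach_def c .
qed

lemma reach_mono: "F \<subseteq> G \<Longrightarrow> reach F u w \<Longrightarrow> reach G u w"
  unfolding reach_def by (erule rtrancl_mono[THEN subsetD, rotated]) auto

lemma reach_edge: "{u,w} \<in> F \<Longrightarrow> reach F u w"
  unfolding reach_def by auto

lemma reach_trans: "reach F u w \<Longrightarrow> reach F w z \<Longrightarrow> reach F u z"
  unfolding reach_def by (rule rtrancl_trans)

lemma reach_refl: "reach F u u" unfolding reach_def by auto

lemma reach_vert: "reach F u w \<Longrightarrow> u \<noteq> w \<Longrightarrow> w \<in> \<Union>F"
  unfolding reach_def by (erule rtranclE) auto

lemma reach_fresh: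
  assumes "p \<notin> \<Union>F" "u \<noteq> p" "r \<noteq> p" "reach (insert {r,p} F) u w"
  shows "(w \<noteq> p \<longrightarrow> reach F u w) \<and> (w = p \<longrightarrow> reach F u r)"
  using assms(4) unfolding reach_def
proof (induction rule: rtrancl_induct)
  case base
  then show ?case using assms(2) by auto
next
  case (step y z)
  then have e: "{y,z} = {r,p} \<or> {y,z} \<in> F" by auto
  show ?case
  proof (cases "{y,z} = {r,p}")
    case True
    then have "(y = r \<and> z = p) \<or> (y = p \<and> z = r)" by (auto simp: doubleton_eq_iff)
    then show ?thesis using step assms(3) by auto
  next
    case False
    then have f: "{y,z} \<in> F" using e by auto
    then have "y \<noteq> p" "z \<noteq> p" using assms(1) by auto
    then show ?thesis using step f by (auto intro: rtrancl_into_rtrancl)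
  qed
qed

definition tree :: "'a set \<Rightarrow> 'a set set \<Rightarrow> bool" where
  "tree TV TE \<longleftrightarrow> connected_graph TV TE \<and> acyclic_edges TE \<and> (\<forall>e\<in>TE. e \<subseteq> TV)"

lemma tree_pendant:
  assumes t: "tree TV TE" and r: "r \<in> TV" and p: "p \<notin> TV"
  shows "tree (insert p TV) (insert {r,p} TE)"
proof -
  have sub: "\<forall>e\<in>TE. e \<subseteq> TV" and con: "connected_graph TV TE" and ac: "acyclic_edges TE"
    using t unfolding tree_def by auto
  have rp: "r \<noteq> p" using r p by auto
  have pU: "p \<notin> \<Union>TE" using sub p by auto
  let ?F = "insert {r,p} TE"
  have rpr: "reach ?F r p" "reach ?F p r" by (auto intro: reach_edge simp: insert_commute)
  have old: "reach ?F u w" if "u \<in> TV" "w \<in> TV" for u w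
    using con that unfolding connected_graph_def by (auto intro: reach_mono[of TE])
  have "connected_graph (insert p TV) ?F"
    unfolding connected_graph_def
  proof (intro conjI ballI)
    fix u w assume u: "u \<in> insert p TV" and w: "w \<in> insert p TV"
    show "reach ?F u w"
    proof (cases "u = p")
      case True
      show ?thesis
      proof (cases "w = p")
        case True then show ?thesis using \<open>u = p\<close> by (simp add: reach_refl)
      next
        case False then show ?thesis using True w rpr old r by (blast intro: reach_trans)
      qed
    next
      case False
      then have uT: "u \<in> TV" using u by auto
      show ?thesis
      proof (cases "w = p")
        case True then show ?thesis using uT rpr old r by (blast intro: reach_trans)
      next
        case False then show ?thesis using uT w old by auto
      qed
    qed
  qed auto
  moreover have "acyclic_edges ?F"
    unfolding acyclic_edges_def
  proof (intro allI impI notI)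
    fix u w assume uw: "{u,w} \<in> ?F" and re: "reach (?F - {{u,w}}) u w"
    show False
    proof (cases "{u,w} = {r,p}")
      case True
      then have o: "(u = r \<and> w = p) \<or> (u = p \<and> w = r)" by (auto simp: doubleton_eq_iff)
      have "reach TE u w" using re True by (auto intro: reach_mono)
      moreover have "reach TE w u" using calculation by (rule reach_sym)
      ultimately show False using o rp pU reach_vert by metis
    next
      case False
      then have inT: "{u,w} \<in> TE" using uw by auto
      then have "u \<in> TV" "w \<in> TV" using sub by auto
      then have up: "u \<noteq> p" "w \<noteq> p" using p by auto
      have eq: "?F - {{u,w}} = insert {r,p} (TE - {{u,w}})" using False by auto
      have "p \<notin> \<Union>(TE - {{u,w}})" using pU by auto
      from reach_fresh[OF this up(1) rp] re eq up(2)
      have "reach (TE - {{u,w}}) u w" by auto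
      then show False using ac inT unfolding acyclic_edges_def by auto
    qed
  qed
  moreover have "\<forall>e\<in>?F. e \<subseteq> insert p TV" using sub r by auto
  ultimately show ?thesis unfolding tree_def by auto
qed

lemma tree_star:
  assumes "finite W" "v \<notin> W"
  shows "tree (insert v W) ((\<lambda>z. {v,z}) ` W)"
  using assms
proof (induction W rule: finite_induct)
  case empty
  then show ?case unfolding tree_def connected_graph_def acyclic_edges_def
    by (auto simp: reach_refl)
next
  case (insert z W)
  have "tree (insert z (insert v W)) (insert {v,z} ((\<lambda>z. {v,z}) ` W))"
    by (rule tree_pendant) (use insert in auto)
  then show ?case by (simp add: insert_commute)
qed


lemma mod_suc_ne: "(2::nat) \<le> m \<Longrightarrow> Suc a mod m \<noteq> a mod m"
  by (simp add: mod_Suc)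

lemma core:
  fixes V :: "'a set"
  assumes fin: "finite V" and cV: "card V = n" and n5: "n \<ge> 5"
    and vV: "v \<in> V" and pV: "p \<in> V" and qV: "q \<in> V" and d1: "p \<noteq> v" and d2: "q \<noteq> v" and d3: "p \<noteq> q"
    and rV: "r \<in> V" "r \<notin> {v,p,q}" and sV: "s \<in> V" "s \<noteq> q" "s \<noteq> v" "s \<noteq> r"
    and TE: "insert {s,q} (insert {r,p} ((\<lambda>z. {v,z}) ` (V - {v,p,q}))) \<subseteq> E"
  shows "\<exists>c. k_proper_coloring V E k c \<and> card (c ` E) \<le> n - 3"
proof -
  note D = d1 d2 d3 rV sV
  define W where "W = V - {v,p,q}"
  define T where "T = insert {s,q} (insert {r,p} ((\<lambda>z. {v,z}) ` W))"
  define m where "m = n - 3"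
  have m2: "2 \<le> m" using n5 m_def by auto
  have finW: "finite W" using fin W_def by auto
  have cW: "card W = m" unfolding W_def m_def using fin cV vV pV qV d1 d2 d3
    by (subst card_Diff_subset) auto
  obtain g where g: "bij_betw g W {..<m}"
    using finite_same_card_bij[OF finW, of "{..<m}"] cW by auto
  have rW: "r \<in> W" using rV W_def by auto
  have sW: "s = p \<or> s \<in> W" using sV W_def by auto
  have t1: "tree (insert v W) ((\<lambda>z. {v,z}) ` W)" by (rule tree_star) (use finW W_def in auto)
  have t2: "tree (insert p (insert v W)) (insert {r,p} ((\<lambda>z. {v,z}) ` W))"
    by (rule tree_pendant[OF t1]) (use rW W_def d1 in auto)
  have t3: "tree (insert q (insert p (insert v W))) T"
    unfolding T_def by (rule tree_pendant[OF t2]) (use sW W_def D in auto)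
  have VV: "insert q (insert p (insert v W)) = V" using W_def vV pV qV by auto
  have tT: "tree V T" using t3 VV by simp
  define c where "c e = (if e = {r,p} then Suc (g r) mod m
      else if e = {s,q} then (if s = p then Suc (Suc (g r)) mod m else Suc (g s) mod m)
      else g (SOME z. z \<in> e \<and> z \<noteq> v) mod m)" for e
  have gm: "z \<in> W \<Longrightarrow> g z < m" for z using g by (auto simp: bij_betw_def)
  have ginj: "z \<in> W \<Longrightarrow> z' \<in> W \<Longrightarrow> g z = g z' \<Longrightarrow> z = z'" for z z'
    using g by (auto simp: bij_betw_def inj_on_def)
  have cstar: "z \<in> W \<Longrightarrow> c {v,z} = g z" for z
  proof -
    assume z: "z \<in> W"
    then have "z \<noteq> v" using W_def by auto
    moreover have "{v,z} \<noteq> {r,p}" "{v,z} \<noteq> {s,q}" using D by (auto simp: doubleton_eq_iff)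
    moreover have "(SOME w. w \<in> {v,z} \<and> w \<noteq> v) = z" using \<open>z \<noteq> v\<close> by (intro some_equality) auto
    ultimately show ?thesis unfolding c_def using gm z by simp
  qed
  have crp: "c {r,p} = Suc (g r) mod m" unfolding c_def by simp
  have csq: "c {s,q} = (if s = p then Suc (Suc (g r)) mod m else Suc (g s) mod m)"
    using D unfolding c_def by (auto simp: doubleton_eq_iff)
  have ne1: "Suc (g z) mod m \<noteq> g z" if "z \<in> W" for z
    using mod_suc_ne[OF m2, of "g z"] gm[OF that] by simp
  have ne2: "Suc (Suc (g r)) mod m \<noteq> Suc (g r) mod m" using mod_suc_ne[OF m2] .
  have pW: "p \<notin> W" "q \<notin> W" "v \<notin> W" using W_def by auto
  have propT: "proper_edges c T"
    unfolding proper_edges_def T_def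
  proof (intro ballI impI)
    fix e f assume e: "e \<in> insert {s,q} (insert {r,p} ((\<lambda>z. {v,z}) ` W))"
      and f: "f \<in> insert {s,q} (insert {r,p} ((\<lambda>z. {v,z}) ` W))"
      and ef: "e \<noteq> f \<and> e \<inter> f \<noteq> {}"
    have key: "c e \<noteq> c f" if e: "e \<in> insert {s,q} (insert {r,p} ((\<lambda>z. {v,z}) ` W))"
      and f: "f \<in> insert {s,q} (insert {r,p} ((\<lambda>z. {v,z}) ` W))"
      and ef: "e \<noteq> f" "e \<inter> f \<noteq> {}"
      and ord: "e = {s,q} \<or> (e = {r,p} \<and> f \<noteq> {s,q}) \<or> (e \<noteq> {s,q} \<and> e \<noteq> {r,p} \<and> f \<noteq> {s,q} \<and> f \<noteq> {r,p})"
      for e f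
    proof -
      consider (a) "e = {s,q}" | (b) "e = {r,p}" "f \<noteq> {s,q}" | (c) "e \<noteq> {s,q}" "e \<noteq> {r,p}" "f \<noteq> {s,q}" "f \<noteq> {r,p}"
        using ord by blast
      then show ?thesis
      proof cases
        case a
        then consider (rp) "f = {r,p}" | (st) z where "z \<in> W" "f = {v,z}" using f ef by auto
        then show ?thesis
        proof cases
          case rp
          then have "s = p" using a ef D by auto
          then show ?thesis using a rp crp csq ne2 by simp
        next
          case st
          then have "z = s" "s \<in> W" using a ef D pW by auto
          then show ?thesis using a st cstar csq ne1 \<open>s \<in> W\<close> pW by auto
        qed
      next
        case b
        then obtain z where z: "z \<in> W" "f = {v,z}" using f ef by auto
        then have "z = r" using b ef D pW by auto
        then show ?thesis using b z cstar crp ne1 rW by auto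
      next
        case c
        then obtain z z' where "z \<in> W" "e = {v,z}" "z' \<in> W" "f = {v,z'}" using e f by auto
        then show ?thesis using cstar[of z] cstar[of z'] ginj[of z z'] ef by auto
      qed
    qed
    show "c e \<noteq> c f"
    proof (cases "e = {s,q} \<or> (e = {r,p} \<and> f \<noteq> {s,q}) \<or> (e \<noteq> {s,q} \<and> e \<noteq> {r,p} \<and> f \<noteq> {s,q} \<and> f \<noteq> {r,p})")
      case True then show ?thesis using ef by (intro key[OF e f]) (use True in auto)
    next
      case False
      then have "f = {s,q} \<or> (f = {r,p} \<and> e \<noteq> {s,q})" by blast
      then have "c f \<noteq> c e" using ef by (intro key[OF f e]) auto
      then show ?thesis by simp
    qed
  qed
  have "k_proper_coloring V E k c"
    unfolding k_proper_coloring_def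
  proof (intro allI impI)
    fix S assume "S \<subseteq> V \<and> card S = k"
    moreover have "subtree V E V T" using tT TE unfolding subtree_def tree_def T_def W_def by auto
    ultimately show "\<exists>TV TE. subtree V E TV TE \<and> S \<subseteq> TV \<and> proper_edges c TE" using propT by blast
  qed
  moreover have "card (c ` E) \<le> n - 3"
  proof -
    have "c ` E \<subseteq> {..<m}" unfolding c_def using m2 by auto
    then have "card (c ` E) \<le> card {..<m}" by (rule card_mono[rotated]) auto
    then show ?thesis using m_def by simp
  qed
  ultimately show ?thesis by blast
qed

lemma star_sub: "(\<lambda>z. {v,z}) ` (V - {v,p,q}) \<subseteq> star_edges V v"
  unfolding star_edges_def by auto

theorem mainTheorem15:
  fixes V :: "'a set" and v a b x y :: 'a and n k :: nat
  assumes "finite V" and "card V = n" and "n \<ge> 5" and "v \<in> V"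
    and "a \<in> V - {v}" and "b \<in> V - {v}" and "a \<noteq> b"
    and "x \<in> V" and "y \<in> V" and "x \<noteq> y"
    and "{x, y} \<notin> star_edges V v \<union> {{a, b}}"
    and "3 \<le> k" and "k \<le> n"
  shows "proper_index V (star_edges V v \<union> {{a, b}, {x, y}}) k \<le> n - 3"
proof -
  let ?E = "star_edges V v \<union> {{a, b}, {x, y}}"
  have xv: "x \<noteq> v"
  proof
    assume "x = v"
    then have "{x,y} \<in> star_edges V v" using assms(8-10) unfolding star_edges_def by auto
    then show False using assms(11) by auto
  qed
  have yv: "y \<noteq> v"
  proof
    assume "y = v"
    then have "{x,y} \<in> star_edges V v" using assms(8-10) unfolding star_edges_def
      by (auto simp: insert_commute)
    then show False using assms(11) by auto
  qed
  have xyab: "{x,y} \<noteq> {a,b}" using assms(11) by auto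
  have F: "finite V" "card V = n" "n \<ge> 5" "v \<in> V" using assms by auto
  have ex: "\<exists>c. k_proper_coloring V ?E k c \<and> card (c ` ?E) \<le> n - 3"
  proof -
    consider (d) "x \<notin> {a,b}" "y \<notin> {a,b}" | (xa) "x = a" | (xb) "x = b" | (ya) "y = a" | (yb) "y = b"
      by blast
    then show ?thesis
    proof cases
      case d
      show ?thesis
        by (rule core[OF F, of b y a x]) (use d assms xv yv star_sub[of v V b y] in auto)
    next
      case xa
      then have "y \<noteq> b" using xyab by auto
      then show ?thesis
        by (intro core[OF F, of a y b a]) (use xa assms xv yv star_sub[of v V a y] in \<open>auto simp: insert_commute\<close>)
    next
      case xb
      then have "y \<noteq> a" using xyab by (auto simp: insert_commute)
      then show ?thesis
        by (intro core[OF F, of b y a b]) (use xb assms xv yv star_sub[of v V b y] in \<open>auto simp: insert_commute\<close>)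
    next
      case ya
      then have "x \<noteq> b" using xyab by (auto simp: insert_commute)
      then show ?thesis
        by (intro core[OF F, of a x b a]) (use ya assms xv yv star_sub[of v V a x] in \<open>auto simp: insert_commute\<close>)
    next
      case yb
      then have "x \<noteq> a" using xyab by (auto simp: insert_commute)
      then show ?thesis
        by (intro core[OF F, of b x a b]) (use yb assms xv yv star_sub[of v V b x] in \<open>auto simp: insert_commute\<close>)
    qed
  qed
  then obtain c where c: "k_proper_coloring V ?E k c" "card (c ` ?E) \<le> n - 3" by blast
  have "proper_index V ?E k \<le> card (c ` ?E)"
    unfolding proper_index_def by (rule Least_le) (use c in blast)
  then show ?thesis using c by linarith
qed

end
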